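(* Let $s,d,r>0$. Let $J:\mathbb{R}\to\mathbb{R}$ satisfy (J1)–(J3) below, and let $\alpha:\mathbb{R}\to\mathbb{R}$ be continuous and satisfy ($\alpha$1)–($\alpha$2) below (with $\alpha(+\infty)$ not necessarily equal to $1$). Then the equation $$-s\phi'(z)=d\Big(\int_{\mathbb{R}}J(y)\phi(z-y)dy-\phi(z)\Big)+r\phi(z)[\alpha(z)-\phi(z)],\quad z\in\mathbb{R},$$ admits a positive $C^1(\mathbb{R})$ solution $\phi$ with $\phi(-\infty)=0$ and $\phi(+\infty)=\alpha(+\infty)$, and there exist $\lambda_0>0$ and $B>0$ such that $\alpha(+\infty)\ge\phi(z)\ge\alpha(+\infty)-Be^{-\lambda_0z}$ for all $z\in\mathbb{R}$.
   Context: (J1) $J\ge0$ is Lebesgue measurable, $\int_{\mathbb{R}}J=1$, and there are $\eta>0$ and $y^-<0<y^+$ such that $J>0$ on $(y^--\eta,y^-+\eta)$ and on $(y^+-\eta,y^++\eta)$; (J2) $\int_{\mathbb{R}}J(y)\,y\,dy=0$; (J3) there are $-\infty\le\tilde\lambda<0<\hat\lambda\le+\infty$ such that $I(\lambda):=\int_{\mathbb{R}}J(y)e^{\lambda y}dy<+\infty$ for $\lambda\in(\tilde\lambda,\hat\lambda)$ and $I(\lambda)\to+\infty$ as $\lambda\downarrow\tilde\lambda$ and as $\lambda\uparrow\hat\lambda$. ($\alpha$1) $\alpha$ has finite limits $\alpha(\pm\infty)$ with $\alpha(-\infty)<0<\alpha(+\infty)$, and $\alpha(z)\le\alpha(+\infty)$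 for all $z$; ($\alpha$2) there exist $C>0$, $\rho>0$ with $\alpha(+\infty)-\alpha(z)\le Ce^{-\rho z}$ for all sufficiently large $z$. *)

theory Defs
  imports "HOL-Analysis.Analysis"
begin

definition expmom :: "(real \<Rightarrow> real) \<Rightarrow> real \<Rightarrow> ennreal" where
  "expmom J l = (\<integral>\<^sup>+ y. ennreal (J y * exp (l * y)) \<partial>lebesgue)"

definition ereal_down :: "ereal \<Rightarrow> real filter" where
  "ereal_down a = (if a = -\<infinity> then at_bot else at_right (real_of_ereal a))"

definition ereal_up :: "ereal \<Rightarrow> real filter" where
  "ereal_up b = (if b = \<infinity> then at_top else at_left (real_of_ereal b))"

end

theory Submission
  imports Defs
begin

lemma cont_meas_leb: assumes "continuous_on UNIV (g::real\<Rightarrow>real)" shows "g \<in> borel_measurable lebesgue"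
proof -
  have "g \<in> borel_measurable lborel" using borel_measurable_continuous_onI[OF assms] by simp
  then show ?thesis by (rule measurable_completion)
qed

lemma cont_meas_lborel: assumes "continuous_on UNIV (g::real\<Rightarrow>real)" shows "g \<in> borel_measurable lborel"
  using borel_measurable_continuous_onI[OF assms] by simp

lemma einterval_top: "einterval (ereal z) \<infinity> = {z<..}"
  by (auto simp: einterval_iff)

lemma exp_half:
  fixes c z :: real assumes c: "c > 0"
  shows "set_integrable lborel (einterval z \<infinity>) (\<lambda>t. exp (-c*(t-z)))"
    "(LBINT t=ereal z..\<infinity>. exp (-c*(t-z))) = 1/c"
proof -
  let ?F = "\<lambda>t. - exp (-c*(t-z)) / c"
  have d: "\<And>t. (?F has_real_derivative exp (-c*(t-z))) (at t)"
    using c by (auto intro!: derivative_eq_intros simp: field_simps)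
  have A: "((?F \<circ> real_of_ereal) \<longlongrightarrow> -1/c) (at_right (ereal z))"
  proof -
    have "(?F \<longlongrightarrow> ?F z) (at_right z)"
      using c by (intro tendsto_intros) auto
    then show ?thesis unfolding ereal_tendsto_simps using c by simp
  qed
  have *: "((\<lambda>t. exp (-c*(t-z))) \<longlongrightarrow> 0) at_top"
  proof -
    have "filterlim (\<lambda>t. -c*(t-z)) at_bot at_top"
      using c by real_asymp
    then show ?thesis by (rule exp_at_bot[THEN filterlim_compose])
  qed
  have B: "((?F \<circ> real_of_ereal) \<longlongrightarrow> 0) (at_left \<infinity>)"
    unfolding ereal_tendsto_simps
    using tendsto_divide[OF tendsto_minus[OF *] tendsto_const[of c]] c by simp
  have m: "ereal z < \<infinity>" by simp
  show "set_integrable lborel (einterval z \<infinity>) (\<lambda>t. exp (-c*(t-z)))"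
    by (rule interval_integral_FTC_nonneg(1)[OF m d _ _ A B]) (auto intro!: continuous_intros)
  have "(LBINT t=ereal z..\<infinity>. exp (-c*(t-z))) = 0 - (-1/c)"
    by (rule interval_integral_FTC_nonneg(2)[OF m d _ _ A B]) (auto intro!: continuous_intros)
  then show "(LBINT t=ereal z..\<infinity>. exp (-c*(t-z))) = 1/c" by simp
qed

definition Hc :: "real \<Rightarrow> (real \<Rightarrow> real) \<Rightarrow> real \<Rightarrow> real" where
  "Hc c G z = (LBINT t=ereal z..\<infinity>. exp (-c*(t-z)) * G t)"

lemma Hc_int:
  fixes c K y z :: real
  assumes c: "c > 0" and G: "G \<in> borel_measurable lborel" and K: "\<And>t. \<bar>G t\<bar> \<le> K"
  shows "set_integrable lborel (einterval (ereal y) \<infinity>) (\<lambda>t. exp (-c*(t-z)) * G t)"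
proof -
  have "set_integrable lborel (einterval (ereal y) \<infinity>) (\<lambda>t. exp (-c*(t-y)))" by (rule exp_half[OF c])
  then have i1: "set_integrable lborel (einterval (ereal y) \<infinity>) (\<lambda>t. (K * exp (c*(z - y))) * exp (-c*(t-y)))"
    by (rule set_integrable_mult_right)
  show ?thesis
  proof (rule set_integrable_bound[OF i1])
    show "set_borel_measurable lborel (einterval (ereal y) \<infinity>) (\<lambda>t. exp (- c * (t - z)) * G t)"
      unfolding set_borel_measurable_def using G by measurable
    show "AE x in lborel. x \<in> einterval (ereal y) \<infinity> \<longrightarrow>
         norm (exp (- c * (x - z)) * G x) \<le> norm (K * exp (c * (z - y)) * exp (- c * (x - y)))"
    proof (intro AE_I2 impI)
      fix x
      have e: "exp (c * (z - y)) * exp (- c * (x - y)) = exp (- c * (x - z))"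
        by (simp add: exp_add[symmetric] algebra_simps)
      have "norm (exp (- c * (x - z)) * G x) = exp (- c * (x - z)) * \<bar>G x\<bar>" by (simp add: abs_mult)
      also have "\<dots> \<le> exp (- c * (x - z)) * K" using K[of x] by (intro mult_left_mono) auto
      also have "\<dots> = K * exp (c * (z - y)) * exp (- c * (x - y))" using e by (simp add: algebra_simps)
      also have "\<dots> \<le> norm (K * exp (c * (z - y)) * exp (- c * (x - y)))" by simp
      finally show "norm (exp (- c * (x - z)) * G x) \<le> norm (K * exp (c * (z - y)) * exp (- c * (x - y)))" .
    qed
  qed
qed

lemma Hc_eq: "Hc c G z = (LINT t:{z<..}|lborel. exp (-c*(t-z)) * G t)"
  unfolding Hc_def interval_lebesgue_integral_def einterval_top by simp

lemma Hc_mono: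
  fixes c :: real
  assumes c: "c > 0" and G1: "G1 \<in> borel_measurable lborel" and G2: "G2 \<in> borel_measurable lborel"
    and K1: "\<And>t. \<bar>G1 t\<bar> \<le> K" and K2: "\<And>t. \<bar>G2 t\<bar> \<le> K" and le: "\<And>t. t > z \<Longrightarrow> G1 t \<le> G2 t"
  shows "Hc c G1 z \<le> Hc c G2 z"
  unfolding Hc_eq
  apply (rule set_integral_mono)
  using Hc_int[OF c G1 K1, of z z] Hc_int[OF c G2 K2, of z z] le
  by (auto simp: einterval_top intro!: mult_left_mono)

lemma Hc_bounds:
  fixes c :: real
  assumes c: "c > 0" and G: "G \<in> borel_measurable lborel"
    and K: "\<And>t. 0 \<le> G t \<and> G t \<le> K"
  shows "0 \<le> Hc c G z" "Hc c G z \<le> K / c"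
proof -
  have K': "\<And>t. \<bar>G t\<bar> \<le> K" using K by (metis abs_of_nonneg)
  have "0 \<le> K" using K[of 0] by linarith
  have "Hc c (\<lambda>_. 0) z \<le> Hc c G z"
    by (rule Hc_mono[OF c _ G _ K']) (use K \<open>0 \<le> K\<close> in auto)
  then show "0 \<le> Hc c G z" by (simp add: Hc_def)
  have "Hc c G z \<le> Hc c (\<lambda>_. K) z"
    by (rule Hc_mono[OF c G _ K']) (use K \<open>0 \<le> K\<close> in auto)
  also have "Hc c (\<lambda>_. K) z = K * (LBINT t=ereal z..\<infinity>. exp (-c*(t-z)))"
    unfolding Hc_def by (simp add: mult.commute)
  also have "\<dots> = K / c" using exp_half(2)[OF c] by simp
  finally show "Hc c G z \<le> K / c" .
qed

lemma Hc_deriv: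
  fixes c K z :: real
  assumes c: "c > 0" and Gc: "continuous_on UNIV G" and K: "\<And>t. \<bar>G t\<bar> \<le> K"
  shows "(Hc c G has_real_derivative (c * Hc c G z - G z)) (at z)"
proof -
  define f where "f t = exp(-c*t) * G t" for t
  have fc: "continuous_on UNIV f" unfolding f_def by (intro continuous_intros Gc)
  have Gm: "G \<in> borel_measurable lborel" by (rule cont_meas_lborel[OF Gc])
  have fe: "f = (\<lambda>t. exp (-(c*t)) * G t)" by (rule ext) (simp add: f_def)
  have fint: "interval_lebesgue_integrable lborel (ereal y) \<infinity> f" for y
    unfolding interval_lebesgue_integrable_def using Hc_int[OF c Gm K, of y 0]
    by (simp add: fe)
  define P where "P x = (LBINT t=ereal x..\<infinity>. f t)" for x
  have HP: "Hc c G x = exp (c*x) * P x" for x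
  proof -
    have "Hc c G x = (LBINT t=ereal x..\<infinity>. exp (c*x) * f t)"
      unfolding Hc_def f_def by (simp add: exp_add[symmetric] algebra_simps)
    then show ?thesis unfolding P_def by simp
  qed
  define a where "a = z - 1"
  have Psplit: "P x = P a - (LBINT t=ereal a..ereal x. f t)" for x
  proof -
    have "(LBINT t=ereal a..ereal x. f t) + (LBINT t=ereal x..\<infinity>. f t) = (LBINT t=ereal a..\<infinity>. f t)"
    proof (rule interval_integral_sum)
      have "min (ereal a) (min (ereal x) \<infinity>) = ereal (min a x)" by (simp add: min_def)
      moreover have "max (ereal a) (max (ereal x) \<infinity>) = \<infinity>" by simp
      ultimately show "interval_lebesgue_integrable lborel (min (ereal a) (min (ereal x) \<infinity>))
          (max (ereal a) (max (ereal x) \<infinity>)) f" using fint[of "min a x"] by simp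
    qed
    then show ?thesis unfolding P_def by simp
  qed
  have D0: "((\<lambda>u. LBINT t=ereal a..ereal u. f t) has_vector_derivative f z) (at z within {a..z+1})"
    by (rule interval_integral_FTC2) (use continuous_on_subset[OF fc] in \<open>auto simp: a_def\<close>)
  have D1: "((\<lambda>u. LBINT t=ereal a..ereal u. f t) has_real_derivative f z) (at z)"
  proof -
    have "at z within {a..z+1} = at z" by (rule at_within_Icc_at) (auto simp: a_def)
    then show ?thesis using D0 by (simp add: has_real_derivative_iff_has_vector_derivative)
  qed
  have DP: "(P has_real_derivative - f z) (at z)"
  proof -
    have "((\<lambda>x. P a - (LBINT t=ereal a..ereal x. f t)) has_real_derivative 0 - f z) (at z)"
      by (intro derivative_intros D1)
    moreover have "(\<lambda>x. P a - (LBINT t=ereal a..ereal x. f t)) = P" by (rule ext) (rule Psplit[symmetric])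
    ultimately show ?thesis by simp
  qed
  have e: "((\<lambda>x. exp (c*x)) has_real_derivative exp (c*z) * c) (at z)"
    by (auto intro!: derivative_eq_intros)
  have "((\<lambda>x. exp (c*x) * P x) has_real_derivative (exp (c*z) * c) * P z + (- f z) * exp (c*z)) (at z)"
    by (rule DERIV_mult[OF e DP])
  moreover have "(\<lambda>x. exp (c*x) * P x) = Hc c G" by (rule ext) (rule HP[symmetric])
  moreover have "(exp (c*z) * c) * P z + (- f z) * exp (c*z) = c * Hc c G z - G z"
    using HP[of z] by (simp add: f_def exp_add[symmetric] algebra_simps)
  ultimately show ?thesis by simp
qed

lemma Hc_dom:
  fixes c K z :: real
  assumes c: "c > 0" and Gm: "\<And>n. G n \<in> borel_measurable lborel" and G0m: "G0 \<in> borel_measurable lborel"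
    and K: "\<And>n t. \<bar>G n t\<bar> \<le> K" and lim: "\<And>t. (\<lambda>n. G n t) \<longlonglongrightarrow> G0 t"
  shows "(\<lambda>n. Hc c (G n) z) \<longlonglongrightarrow> Hc c G0 z"
proof -
  have ie: "set_integrable lborel {z<..} (\<lambda>t. exp (-c*(t-z)))"
    using exp_half(1)[OF c, of z] by (simp add: einterval_top)
  have iw: "integrable lborel (\<lambda>t. indicator {z<..} t *\<^sub>R (K * exp (-c*(t-z))))"
    using set_integrable_mult_right[OF ie, of K] unfolding set_integrable_def by simp
  show ?thesis
    unfolding Hc_eq set_lebesgue_integral_def
  proof (rule integral_dominated_convergence[OF _ _ iw])
    show "(\<lambda>t. indicator {z<..} t *\<^sub>R (exp (- c * (t - z)) * G0 t)) \<in> borel_measurable lborel"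
      using G0m by measurable
    show "(\<lambda>t. indicator {z<..} t *\<^sub>R (exp (- c * (t - z)) * G n t)) \<in> borel_measurable lborel" for n
      using Gm[of n] by measurable
    show "AE t in lborel. (\<lambda>n. indicator {z<..} t *\<^sub>R (exp (- c * (t - z)) * G n t)) \<longlonglongrightarrow>
        indicator {z<..} t *\<^sub>R (exp (- c * (t - z)) * G0 t)"
      by (intro AE_I2 tendsto_intros lim)
    show "AE t in lborel. norm (indicator {z<..} t *\<^sub>R (exp (- c * (t - z)) * G n t)) \<le>
        indicator {z<..} t *\<^sub>R (K * exp (- c * (t - z)))" for n
    proof (intro AE_I2)
      fix t
      have "\<bar>exp (- c * (t - z)) * G n t\<bar> \<le> K * exp (- c * (t - z))"
        using K[of n t] by (simp add: abs_mult mult.commute mult_left_mono)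
      then show "norm (indicator {z<..} t *\<^sub>R (exp (- c * (t - z)) * G n t)) \<le>
        indicator {z<..} t *\<^sub>R (K * exp (- c * (t - z)))"
        by (auto simp: indicator_def)
    qed
  qed
qed

lemma mono_exp:
  fixes s a x y :: real
  assumes s: "s > 0" and xy: "x \<le> y"
    and D: "\<And>t. x \<le> t \<Longrightarrow> t \<le> y \<Longrightarrow> (w has_real_derivative w' t) (at t)"
    and ineq: "\<And>t. x \<le> t \<Longrightarrow> t \<le> y \<Longrightarrow> s * w' t \<le> a * w t"
  shows "exp (-(a/s)*y) * w y \<le> exp (-(a/s)*x) * w x"
proof (rule DERIV_nonpos_imp_nonincreasing[OF xy])
  fix t assume t: "x \<le> t" "t \<le> y"
  have e: "((\<lambda>t. exp (-(a/s)*t)) has_real_derivative exp (-(a/s)*t) * (-(a/s))) (at t)"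
    using s by (auto intro!: derivative_eq_intros)
  have "((\<lambda>t. exp (-(a/s)*t) * w t) has_real_derivative
      exp (-(a/s)*t) * (-(a/s)) * w t + w' t * exp (-(a/s)*t)) (at t)"
    by (rule DERIV_mult[OF e D[OF t]])
  moreover have "exp (-(a/s)*t) * (-(a/s)) * w t + w' t * exp (-(a/s)*t) \<le> 0"
  proof -
    have "w' t \<le> (a/s) * w t" using ineq[OF t] s by (simp add: field_simps)
    then have "w' t - (a/s) * w t \<le> 0" by simp
    then have "exp (-(a/s)*t) * (w' t - (a/s) * w t) \<le> 0"
      by (simp add: mult_nonneg_nonpos)
    then show ?thesis by (simp add: algebra_simps)
  qed
  ultimately show "\<exists>y. ((\<lambda>t. exp (-(a/s)*t) * w t) has_real_derivative y) (at t) \<and> y \<le> 0"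
    by blast
qed

lemma compare_top:
  fixes s b z B :: real
  assumes s: "s > 0" and b: "b > 0"
    and D: "\<And>t. z \<le> t \<Longrightarrow> (w has_real_derivative w' t) (at t)"
    and ineq: "\<And>t. z \<le> t \<Longrightarrow> s * w' t \<le> b * w t"
    and bd: "\<And>t. z \<le> t \<Longrightarrow> \<bar>w t\<bar> \<le> B"
  shows "0 \<le> w z"
proof -
  have le: "exp (-(b/s)*t) * w t \<le> exp (-(b/s)*z) * w z" if "z \<le> t" for t
    by (rule mono_exp[OF s that D ineq]) auto
  have lim0: "((\<lambda>t. exp (-(b/s)*t)) \<longlongrightarrow> 0) at_top"
  proof -
    have "filterlim (\<lambda>t. -(b/s)*t) at_bot at_top"
      using b s by real_asymp
    then show ?thesis by (rule exp_at_bot[THEN filterlim_compose])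
  qed
  have lim: "((\<lambda>t. exp (-(b/s)*t) * w t) \<longlongrightarrow> 0) at_top"
  proof (rule tendsto_sandwich[of "\<lambda>t. - (B * exp (-(b/s)*t))" _ _ "\<lambda>t. B * exp (-(b/s)*t)"])
    show "\<forall>\<^sub>F t in at_top. - (B * exp (-(b/s)*t)) \<le> exp (-(b/s)*t) * w t"
      using eventually_ge_at_top[of z]
    proof eventually_elim
      case (elim t)
      have "- B \<le> w t" using bd[OF elim] by linarith
      then have "exp (-(b/s)*t) * (- B) \<le> exp (-(b/s)*t) * w t" by (intro mult_left_mono) auto
      then show ?case by (simp add: algebra_simps)
    qed
    show "\<forall>\<^sub>F t in at_top. exp (-(b/s)*t) * w t \<le> B * exp (-(b/s)*t)"
      using eventually_ge_at_top[of z]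
    proof eventually_elim
      case (elim t)
      have "w t \<le> B" using bd[OF elim] by linarith
      then have "exp (-(b/s)*t) * w t \<le> exp (-(b/s)*t) * B" by (intro mult_left_mono) auto
      then show ?case by (simp add: algebra_simps)
    qed
    show "((\<lambda>t. - (B * exp (-(b/s)*t))) \<longlongrightarrow> 0) at_top"
      using tendsto_minus[OF tendsto_mult[OF tendsto_const[of B] lim0]] by simp
    show "((\<lambda>t. B * exp (-(b/s)*t)) \<longlongrightarrow> 0) at_top"
      using tendsto_mult[OF tendsto_const[of B] lim0] by simp
  qed
  have "0 \<le> exp (-(b/s)*z) * w z"
  proof (rule tendsto_le[OF _ tendsto_const lim])
    show "\<forall>\<^sub>F t in at_top. exp (-(b/s)*t) * w t \<le> exp (-(b/s)*z) * w z"
      by (rule eventually_mono[OF eventually_ge_at_top[of z]]) (rule le)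
  qed simp
  then show ?thesis by (simp add: zero_le_mult_iff)
qed


lemma exp_quad:
  fixes e l y :: real
  assumes e: "e > 0" and l: "\<bar>l\<bar> \<le> e/2"
  shows "exp (l*y) \<le> 1 + l*y + l^2 * (4/e^2) * (exp (e*y) + exp (-(e*y)))"
proof -
  obtain t where t: "\<bar>t\<bar> \<le> \<bar>l*y\<bar>" and ex: "exp (l*y) = (\<Sum>m<2. (l*y)^m / fact m) + exp t / fact 2 * (l*y)^2"
    using Maclaurin_exp_le[of "l*y" 2] by blast
  have ex2: "exp (l*y) = 1 + l*y + exp t / 2 * (l*y)^2"
    using ex by (simp add: numeral_2_eq_2)
  define a where "a = e * \<bar>y\<bar> / 2"
  have a0: "a \<ge> 0" using e by (simp add: a_def)
  have "\<bar>l*y\<bar> = \<bar>l\<bar> * \<bar>y\<bar>" by (simp add: abs_mult)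
  also have "\<dots> \<le> (e/2) * \<bar>y\<bar>" using l by (intro mult_right_mono) auto
  finally have "\<bar>t\<bar> \<le> a" using t unfolding a_def by simp
  then have et: "exp t \<le> exp a" by simp
  have qa: "a^2 / 2 \<le> exp a" using exp_lower_Taylor_quadratic[OF a0] a0 by linarith
  have y2: "y^2 = 4 * a^2 / e^2" using e unfolding a_def by (simp add: field_simps power2_eq_square)
  have "exp t / 2 * (l*y)^2 \<le> exp a / 2 * (l^2 * y^2)"
    using et by (simp add: power_mult_distrib mult_right_mono)
  also have "\<dots> = l^2 * (2/e^2) * (exp a * a^2)" using y2 by (simp add: field_simps)
  also have "\<dots> \<le> l^2 * (2/e^2) * (exp a * (2 * exp a))"
    using qa e by (intro mult_left_mono) auto
  also have "\<dots> = l^2 * (4/e^2) * exp (e * \<bar>y\<bar>)"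
  proof -
    have "exp a * exp a = exp (e * \<bar>y\<bar>)" unfolding a_def exp_add[symmetric] by simp
    then show ?thesis by (simp add: field_simps)
  qed
  also have "\<dots> \<le> l^2 * (4/e^2) * (exp (e*y) + exp (-(e*y)))"
  proof -
    have "exp (e * \<bar>y\<bar>) \<le> exp (e*y) + exp (-(e*y))"
      by (cases "y \<ge> 0") (auto simp: abs_if add_increasing add_increasing2)
    then show ?thesis by (intro mult_left_mono) auto
  qed
  finally show ?thesis using ex2 by linarith
qed

locale setting =
  fixes s d r :: real and J \<alpha> :: "real \<Rightarrow> real"
    and \<alpha>m \<alpha>p :: real and lt lh :: ereal
  assumes s_pos: "s > 0" and d_pos: "d > 0" and r_pos: "r > 0"
    and J_meas: "J \<in> borel_measurable lebesgue"
    and J_nonneg: "\<And>y. J y \<ge> 0"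
    and J_int: "integrable lebesgue J" and J_mass: "integral\<^sup>L lebesgue J = 1"
    and J_mean: "integral\<^sup>L lebesgue (\<lambda>y. J y * y) = 0"
    and lt_neg: "lt < 0" and lh_pos: "0 < lh"
    and I_fin: "\<And>l. lt < ereal l \<Longrightarrow> ereal l < lh \<Longrightarrow> expmom J l < \<infinity>"
    and \<alpha>_cont: "continuous_on UNIV \<alpha>"
    and \<alpha>_bot: "(\<alpha> \<longlongrightarrow> \<alpha>m) at_bot" and \<alpha>_top: "(\<alpha> \<longlongrightarrow> \<alpha>p) at_top"
    and \<alpha>m_neg: "\<alpha>m < 0" and \<alpha>p_pos: "0 < \<alpha>p"
    and \<alpha>_le: "\<And>z. \<alpha> z \<le> \<alpha>p"
    and \<alpha>_rate: "\<exists>C>0. \<exists>\<rho>>0. eventually (\<lambda>z. \<alpha>p - \<alpha> z \<le> C * exp (- \<rho> * z)) at_top"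
begin

lemma J_exp_int:
  assumes "lt < ereal l" "ereal l < lh"
  shows "integrable lebesgue (\<lambda>y. J y * exp (l*y))"
  unfolding integrable_iff_bounded
proof
  show "(\<lambda>y. J y * exp (l * y)) \<in> borel_measurable lebesgue"
    by (intro borel_measurable_times[OF J_meas cont_meas_leb] continuous_intros)
  have "(\<integral>\<^sup>+ y. ennreal (norm (J y * exp (l * y))) \<partial>lebesgue) = expmom J l"
    unfolding expmom_def using J_nonneg by (intro nn_integral_cong) (simp add: abs_mult)
  then show "(\<integral>\<^sup>+ y. ennreal (norm (J y * exp (l * y))) \<partial>lebesgue) < \<infinity>"
    using I_fin[OF assms] by simp
qed

lemma exists_e: "\<exists>e>0. lt < ereal (-e) \<and> ereal e < lh"
proof -
  obtain a where a: "lt < ereal a" "ereal a < 0" using ereal_dense2[OF lt_neg] by blast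
  obtain b where b: "0 < ereal b" "ereal b < lh" using ereal_dense2[OF lh_pos] by blast
  have a0: "a < 0" and b0: "b > 0" using a b by auto
  define e where "e = min (-a) b"
  have "e > 0" using a0 b0 by (simp add: e_def)
  moreover have "lt < ereal (-e)"
    using a(1) by (rule order_less_le_trans) (simp add: e_def)
  moreover have "ereal e < lh"
    using b(2) by (rule order_le_less_trans[rotated]) (simp add: e_def)
  ultimately show ?thesis by blast
qed

definition e0 where "e0 = (SOME e. e>0 \<and> lt < ereal (-e) \<and> ereal e < lh)"

lemma e0: "e0 > 0" "lt < ereal (-e0)" "ereal e0 < lh"
  using someI_ex[OF exists_e] unfolding e0_def by auto

definition Im :: "real \<Rightarrow> real" where "Im l = (\<integral>y. J y * exp (l*y) \<partial>lebesgue)"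

lemma J_exp_int': "\<bar>l\<bar> \<le> e0 \<Longrightarrow> integrable lebesgue (\<lambda>y. J y * exp (l*y))"
proof (rule J_exp_int)
  assume l: "\<bar>l\<bar> \<le> e0"
  show "lt < ereal l" by (rule order_less_le_trans[OF e0(2)]) (use l in simp)
  show "ereal l < lh" by (rule order_le_less_trans[OF _ e0(3)]) (use l in simp)
qed

lemma J_y_int: "integrable lebesgue (\<lambda>y. J y * y)"
proof (rule Bochner_Integration.integrable_bound)
  show "integrable lebesgue (\<lambda>y. (1/e0) * (J y * exp (e0*y) + J y * exp ((-e0)*y)))"
    using J_exp_int'[of e0] J_exp_int'[of "-e0"] e0(1) by auto
  have "(\<lambda>x::real. x) \<in> borel_measurable lebesgue" using id_borel_measurable_lebesgue by (simp add: id_def)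
  then show "(\<lambda>y. J y * y) \<in> borel_measurable lebesgue" using J_meas by (intro borel_measurable_times)
  show "AE y in lebesgue. norm (J y * y) \<le> norm ((1/e0) * (J y * exp (e0*y) + J y * exp ((-e0)*y)))"
  proof (intro AE_I2)
    fix y
    have "e0 * \<bar>y\<bar> \<le> exp (e0 * \<bar>y\<bar>)" by (meson exp_ge_add_one_self order_trans le_add_same_cancel2 zero_le_one add_increasing less_imp_le exp_gt_zero)
    also have "\<dots> \<le> exp (e0*y) + exp ((-e0)*y)"
      by (cases "y \<ge> 0") (auto simp: abs_if add_increasing add_increasing2)
    finally have "\<bar>y\<bar> \<le> (1/e0) * (exp (e0*y) + exp ((-e0)*y))" using e0(1) by (simp add: field_simps)
    then have "J y * \<bar>y\<bar> \<le> J y * ((1/e0) * (exp (e0*y) + exp ((-e0)*y)))"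
      using J_nonneg by (intro mult_left_mono) auto
    then show "norm (J y * y) \<le> norm ((1/e0) * (J y * exp (e0*y) + J y * exp ((-e0)*y)))"
      using J_nonneg[of y] e0(1) by (simp add: abs_mult algebra_simps)
  qed
qed

definition Kq where "Kq = (4/e0^2) * (Im e0 + Im (-e0))"

lemma Im_quad:
  assumes l: "\<bar>l\<bar> \<le> e0/2"
  shows "Im l \<le> 1 + l^2 * Kq"
proof -
  have i1: "integrable lebesgue (\<lambda>y. J y * exp (l*y))" using l e0(1) by (intro J_exp_int') auto
  have i2: "integrable lebesgue (\<lambda>y. J y + l * (J y * y) + (l^2 * (4/e0^2)) * (J y * exp (e0*y) + J y * exp ((-e0)*y)))"
    using J_exp_int'[of e0] J_exp_int'[of "-e0"] e0(1) J_int J_y_int by auto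
  have "Im l \<le> (\<integral>y. J y + l * (J y * y) + (l^2 * (4/e0^2)) * (J y * exp (e0*y) + J y * exp ((-e0)*y)) \<partial>lebesgue)"
    unfolding Im_def
  proof (rule integral_mono[OF i1 i2])
    fix y
    have "exp (l*y) \<le> 1 + l*y + l^2 * (4/e0^2) * (exp (e0*y) + exp (-(e0*y)))"
      by (rule exp_quad[OF e0(1) l])
    then have "J y * exp (l*y) \<le> J y * (1 + l*y + l^2 * (4/e0^2) * (exp (e0*y) + exp (-(e0*y))))"
      using J_nonneg by (intro mult_left_mono) auto
    then show "J y * exp (l*y) \<le> J y + l * (J y * y) + (l^2 * (4/e0^2)) * (J y * exp (e0*y) + J y * exp ((-e0)*y))"
      by (simp add: algebra_simps add_divide_distrib)
  qed
  also have "\<dots> = 1 + l^2 * Kq"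
  proof -
    define C where "C = l^2 * (4/e0^2)"
    have iA: "integrable lebesgue (\<lambda>y. J y * exp (e0*y))" using J_exp_int'[of e0] e0(1) by simp
    have iB: "integrable lebesgue (\<lambda>y. J y * exp ((-e0)*y))" using J_exp_int'[of "-e0"] e0(1) by simp
    have iY: "integrable lebesgue (\<lambda>y. l * (J y * y))" using J_y_int by simp
    have "(\<integral>y. J y + l * (J y * y) + C * (J y * exp (e0*y) + J y * exp ((-e0)*y)) \<partial>lebesgue)
       = (\<integral>y. J y + l * (J y * y) \<partial>lebesgue) + (\<integral>y. C * (J y * exp (e0*y) + J y * exp ((-e0)*y)) \<partial>lebesgue)"
      by (rule Bochner_Integration.integral_add) (use J_int iY iA iB in auto)
    also have "(\<integral>y. J y + l * (J y * y) \<partial>lebesgue) = (\<integral>y. J y \<partial>lebesgue) + (\<integral>y. l * (J y * y) \<partial>lebesgue)"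
      by (rule Bochner_Integration.integral_add) (use J_int iY in auto)
    also have "(\<integral>y. l * (J y * y) \<partial>lebesgue) = l * (\<integral>y. J y * y \<partial>lebesgue)" by simp
    also have "(\<integral>y. C * (J y * exp (e0*y) + J y * exp ((-e0)*y)) \<partial>lebesgue)
       = C * ((\<integral>y. J y * exp (e0*y) \<partial>lebesgue) + (\<integral>y. J y * exp ((-e0)*y) \<partial>lebesgue))"
      using Bochner_Integration.integral_add[OF iA iB] by simp
    finally show ?thesis using J_mass J_mean unfolding C_def Kq_def Im_def by simp
  qed
  finally show ?thesis .
qed

end


context setting begin

lemma alpha_lower: "\<exists>A\<ge>0. \<forall>z. -A \<le> \<alpha> z"
proof -
  have "eventually (\<lambda>z. \<alpha> z > \<alpha>m - 1) at_bot"
    using \<alpha>_bot by (rule order_tendstoD) simp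
  then obtain a where a: "\<And>z. z \<le> a \<Longrightarrow> \<alpha> z > \<alpha>m - 1" by (auto simp: eventually_at_bot_linorder)
  have "eventually (\<lambda>z. \<alpha> z > \<alpha>p - 1) at_top"
    using \<alpha>_top by (rule order_tendstoD) simp
  then obtain b where b: "\<And>z. z \<ge> b \<Longrightarrow> \<alpha> z > \<alpha>p - 1" by (auto simp: eventually_at_top_linorder)
  have ic: "isCont \<alpha> x" for x using \<alpha>_cont by (simp add: continuous_on_eq_continuous_at)
  obtain m where m: "\<And>x. min a b \<le> x \<Longrightarrow> x \<le> max a b \<Longrightarrow> m \<le> \<alpha> x"
    using isCont_eq_Lb[of "min a b" "max a b" \<alpha>] ic by force
  define A where "A = \<bar>m\<bar> + \<bar>\<alpha>m\<bar> + \<bar>\<alpha>p\<bar> + 1"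
  have "\<forall>z. -A \<le> \<alpha> z"
  proof
    fix z show "-A \<le> \<alpha> z"
    proof (cases "z \<le> a")
      case True then show ?thesis using a[of z] by (simp add: A_def)
    next
      case F1: False
      show ?thesis
      proof (cases "z \<ge> b")
        case True then show ?thesis using b[of z] by (simp add: A_def)
      next
        case False then show ?thesis using m[of z] F1 by (simp add: A_def)
      qed
    qed
  qed
  moreover have "A \<ge> 0" by (simp add: A_def)
  ultimately show ?thesis by blast
qed

definition Aa where "Aa = (SOME A. A \<ge> 0 \<and> (\<forall>z. -A \<le> \<alpha> z))"

lemma Aa: "Aa \<ge> 0" "\<And>z. -Aa \<le> \<alpha> z"
  using someI_ex[OF alpha_lower] unfolding Aa_def by auto

definition \<beta> where "\<beta> = d + r * Aa + 2 * r * \<alpha>p + 1"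
definition cc where "cc = \<beta> / s"

lemma beta_pos: "\<beta> > 0"
  using d_pos r_pos Aa(1) \<alpha>p_pos unfolding \<beta>_def by (simp add: add_pos_nonneg add_nonneg_nonneg)

lemma cc_pos: "cc > 0"
  using beta_pos s_pos unfolding cc_def by simp

definition conv :: "(real \<Rightarrow> real) \<Rightarrow> real \<Rightarrow> real" where
  "conv \<phi> t = (\<integral>y. J y * \<phi> (t - y) \<partial>lebesgue)"

definition Fop :: "(real \<Rightarrow> real) \<Rightarrow> real \<Rightarrow> real" where
  "Fop \<phi> t = d * conv \<phi> t + \<phi> t * (r * \<alpha> t - r * \<phi> t + \<beta> - d)"

definition Top :: "(real \<Rightarrow> real) \<Rightarrow> real \<Rightarrow> real" where
  "Top \<phi> z = (1/s) * Hc cc (Fop \<phi>) z"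

definition good :: "(real \<Rightarrow> real) \<Rightarrow> bool" where
  "good \<phi> \<longleftrightarrow> continuous_on UNIV \<phi> \<and> (\<forall>t. 0 \<le> \<phi> t \<and> \<phi> t \<le> \<alpha>p)"

lemma shift_meas:
  assumes "continuous_on UNIV (\<phi>::real\<Rightarrow>real)"
  shows "(\<lambda>y. \<phi> (t - y)) \<in> borel_measurable lebesgue"
  by (intro cont_meas_leb continuous_on_compose2[OF assms]) (auto intro!: continuous_intros)

lemma conv_int:
  assumes c: "continuous_on UNIV \<phi>" and B: "\<And>x. \<bar>\<phi> x\<bar> \<le> Bd"
  shows "integrable lebesgue (\<lambda>y. J y * \<phi> (t - y))"
proof (rule Bochner_Integration.integrable_bound)
  show "integrable lebesgue (\<lambda>y. Bd * J y)" using J_int by simp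
  show "(\<lambda>y. J y * \<phi> (t - y)) \<in> borel_measurable lebesgue"
    using J_meas shift_meas[OF c] by (intro borel_measurable_times)
  show "AE y in lebesgue. norm (J y * \<phi> (t - y)) \<le> norm (Bd * J y)"
  proof (intro AE_I2)
    fix y
    have "\<bar>J y * \<phi> (t - y)\<bar> = J y * \<bar>\<phi> (t - y)\<bar>" using J_nonneg[of y] by (simp add: abs_mult)
    also have "\<dots> \<le> J y * Bd" using J_nonneg[of y] B by (intro mult_left_mono) auto
    finally show "norm (J y * \<phi> (t - y)) \<le> norm (Bd * J y)" by (simp add: mult.commute)
  qed
qed

lemma conv_mono:
  assumes c1: "continuous_on UNIV \<phi>1" and B1: "\<And>x. \<bar>\<phi>1 x\<bar> \<le> B1"
    and c2: "continuous_on UNIV \<phi>2" and B2: "\<And>x. \<bar>\<phi>2 x\<bar> \<le> B2"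
    and le: "\<And>y. J y > 0 \<Longrightarrow> \<phi>1 (t - y) \<le> \<phi>2 (t - y)"
  shows "conv \<phi>1 t \<le> conv \<phi>2 t"
  unfolding conv_def
proof (rule integral_mono[OF conv_int[OF c1 B1] conv_int[OF c2 B2]])
  fix y show "J y * \<phi>1 (t - y) \<le> J y * \<phi>2 (t - y)"
    using J_nonneg[of y] le[of y] by (cases "J y > 0") (auto intro: mult_left_mono)
qed

lemma conv_const: "conv (\<lambda>_. a) t = a"
  unfolding conv_def using J_mass by simp

lemma conv_lim:
  assumes c: "\<And>n. continuous_on UNIV (\<phi>s n)" and B: "\<And>n x. \<bar>\<phi>s n x\<bar> \<le> Bd"
    and c0: "continuous_on UNIV \<phi>0"
    and lim: "\<And>x. (\<lambda>n. \<phi>s n x) \<longlonglongrightarrow> \<phi>0 x"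
  shows "(\<lambda>n. conv (\<phi>s n) t) \<longlonglongrightarrow> conv \<phi>0 t"
  unfolding conv_def
proof (rule integral_dominated_convergence[where w="\<lambda>y. Bd * J y"])
  show "integrable lebesgue (\<lambda>y. Bd * J y)" using J_int by simp
  show "(\<lambda>y. J y * \<phi>0 (t - y)) \<in> borel_measurable lebesgue"
    using J_meas shift_meas[OF c0] by (intro borel_measurable_times)
  show "(\<lambda>y. J y * \<phi>s n (t - y)) \<in> borel_measurable lebesgue" for n
    using J_meas shift_meas[OF c] by (intro borel_measurable_times)
  show "AE y in lebesgue. (\<lambda>n. J y * \<phi>s n (t - y)) \<longlonglongrightarrow> J y * \<phi>0 (t - y)"
    by (intro AE_I2 tendsto_intros lim)
  show "AE y in lebesgue. norm (J y * \<phi>s n (t - y)) \<le> Bd * J y" for n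
  proof (intro AE_I2)
    fix y
    have "\<bar>J y * \<phi>s n (t - y)\<bar> = J y * \<bar>\<phi>s n (t - y)\<bar>" using J_nonneg[of y] by (simp add: abs_mult)
    also have "\<dots> \<le> J y * Bd" using J_nonneg[of y] B by (intro mult_left_mono) auto
    finally show "norm (J y * \<phi>s n (t - y)) \<le> Bd * J y" by (simp add: mult.commute)
  qed
qed

lemma conv_cont:
  assumes c: "continuous_on UNIV \<phi>" and B: "\<And>x. \<bar>\<phi> x\<bar> \<le> Bd"
  shows "continuous_on UNIV (conv \<phi>)"
proof -
  have "isCont (conv \<phi>) t" for t
    unfolding continuous_at_sequentially comp_def
  proof (intro allI impI)
    fix xs :: "nat \<Rightarrow> real" assume xs: "xs \<longlonglongrightarrow> t"
    have "(\<lambda>n. \<integral>y. J y * \<phi> (xs n - y) \<partial>lebesgue) \<longlonglongrightarrow> (\<integral>y. J y * \<phi> (t - y) \<partial>lebesgue)"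
    proof (rule integral_dominated_convergence[where w="\<lambda>y. Bd * J y"])
      show "integrable lebesgue (\<lambda>y. Bd * J y)" using J_int by simp
      show "(\<lambda>y. J y * \<phi> (t - y)) \<in> borel_measurable lebesgue"
        using J_meas shift_meas[OF c] by (intro borel_measurable_times)
      show "(\<lambda>y. J y * \<phi> (xs n - y)) \<in> borel_measurable lebesgue" for n
        using J_meas shift_meas[OF c] by (intro borel_measurable_times)
      have ic: "isCont \<phi> x" for x using c by (simp add: continuous_on_eq_continuous_at)
      show "AE y in lebesgue. (\<lambda>n. J y * \<phi> (xs n - y)) \<longlonglongrightarrow> J y * \<phi> (t - y)"
      proof (intro AE_I2 tendsto_intros)
        fix y
        show "(\<lambda>n. \<phi> (xs n - y)) \<longlonglongrightarrow> \<phi> (t - y)"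
          using isCont_tendsto_compose[OF ic tendsto_diff[OF xs tendsto_const[of y]]] .
      qed
      show "AE y in lebesgue. norm (J y * \<phi> (xs n - y)) \<le> Bd * J y" for n
      proof (intro AE_I2)
        fix y
        have "\<bar>J y * \<phi> (xs n - y)\<bar> = J y * \<bar>\<phi> (xs n - y)\<bar>" using J_nonneg[of y] by (simp add: abs_mult)
        also have "\<dots> \<le> J y * Bd" using J_nonneg[of y] B by (intro mult_left_mono) auto
        finally show "norm (J y * \<phi> (xs n - y)) \<le> Bd * J y" by (simp add: mult.commute)
      qed
    qed
    then show "(\<lambda>n. conv \<phi> (xs n)) \<longlonglongrightarrow> conv \<phi> t" unfolding conv_def .
  qed
  then show ?thesis by (simp add: continuous_on_eq_continuous_at)
qed

end


context setting begin

lemma good_abs: "good \<phi> \<Longrightarrow> \<bar>\<phi> x\<bar> \<le> \<alpha>p"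
  unfolding good_def by (metis abs_of_nonneg)

lemma good_cont: "good \<phi> \<Longrightarrow> continuous_on UNIV \<phi>"
  unfolding good_def by simp

lemma good_ge: "good \<phi> \<Longrightarrow> 0 \<le> \<phi> x" and good_le: "good \<phi> \<Longrightarrow> \<phi> x \<le> \<alpha>p"
  unfolding good_def by auto

lemma g_mono:
  assumes "0 \<le> u" "u \<le> v" "v \<le> \<alpha>p"
  shows "u * (r * \<alpha> t - r * u + \<beta> - d) \<le> v * (r * \<alpha> t - r * v + \<beta> - d)"
proof -
  have k: "r * \<alpha> t + \<beta> - d \<ge> 2 * r * \<alpha>p + 1"
  proof -
    have "r * (\<alpha> t + Aa) \<ge> 0" using Aa(2)[of t] r_pos by (intro mult_nonneg_nonneg) auto
    then show ?thesis unfolding \<beta>_def by (simp add: algebra_simps)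
  qed
  have "r * (u + v) \<le> r * (2 * \<alpha>p)" using assms r_pos by (intro mult_left_mono) auto
  then have "(v - u) * (r * \<alpha> t + \<beta> - d - r * (u + v)) \<ge> 0"
    using assms k by (intro mult_nonneg_nonneg) auto
  then show ?thesis by (simp add: algebra_simps)
qed

lemma Fop_cont: "good \<phi> \<Longrightarrow> continuous_on UNIV (Fop \<phi>)"
  unfolding Fop_def[abs_def]
  using conv_cont[OF good_cont good_abs] good_cont \<alpha>_cont
  by (intro continuous_intros) auto

lemma conv_bounds:
  assumes g: "good \<phi>" shows "0 \<le> conv \<phi> t" "conv \<phi> t \<le> \<alpha>p"
proof -
  have "conv (\<lambda>_. 0) t \<le> conv \<phi> t"
    by (rule conv_mono[of "\<lambda>_. 0" 0 \<phi> \<alpha>p]) (use g good_cont good_abs good_ge in auto)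
  then show "0 \<le> conv \<phi> t" by (simp add: conv_const)
  have "conv \<phi> t \<le> conv (\<lambda>_. \<alpha>p) t"
    by (rule conv_mono[of \<phi> \<alpha>p "\<lambda>_. \<alpha>p" \<alpha>p]) (use g good_cont good_abs good_le \<alpha>p_pos in auto)
  then show "conv \<phi> t \<le> \<alpha>p" by (simp add: conv_const)
qed

lemma Fop_bounds:
  assumes g: "good \<phi>" shows "0 \<le> Fop \<phi> t" "Fop \<phi> t \<le> \<beta> * \<alpha>p"
proof -
  have c: "0 \<le> conv \<phi> t" "conv \<phi> t \<le> \<alpha>p" using conv_bounds[OF g] by auto
  have "0 * (r * \<alpha> t - r * 0 + \<beta> - d) \<le> \<phi> t * (r * \<alpha> t - r * \<phi> t + \<beta> - d)"
    by (rule g_mono) (use g good_ge good_le in auto)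
  then show "0 \<le> Fop \<phi> t" unfolding Fop_def using c d_pos by simp
  have "\<phi> t * (r * \<alpha> t - r * \<phi> t + \<beta> - d) \<le> \<alpha>p * (r * \<alpha> t - r * \<alpha>p + \<beta> - d)"
    by (rule g_mono) (use g good_ge good_le in auto)
  also have "\<dots> \<le> \<alpha>p * (\<beta> - d)"
    using \<alpha>_le[of t] \<alpha>p_pos r_pos by (intro mult_left_mono) (auto simp: algebra_simps)
  finally have "\<phi> t * (r * \<alpha> t - r * \<phi> t + \<beta> - d) \<le> \<alpha>p * (\<beta> - d)" .
  moreover have "d * conv \<phi> t \<le> d * \<alpha>p" using c d_pos by simp
  ultimately show "Fop \<phi> t \<le> \<beta> * \<alpha>p" unfolding Fop_def by (simp add: algebra_simps)
qed

lemma Fop_mono: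
  assumes g1: "good \<phi>1" and g2: "good \<phi>2" and le: "\<And>x. \<phi>1 x \<le> \<phi>2 x"
  shows "Fop \<phi>1 t \<le> Fop \<phi>2 t"
proof -
  have "conv \<phi>1 t \<le> conv \<phi>2 t"
    by (rule conv_mono[of \<phi>1 \<alpha>p \<phi>2 \<alpha>p]) (use g1 g2 good_cont good_abs le in auto)
  then have "d * conv \<phi>1 t \<le> d * conv \<phi>2 t" using d_pos by simp
  moreover have "\<phi>1 t * (r * \<alpha> t - r * \<phi>1 t + \<beta> - d) \<le> \<phi>2 t * (r * \<alpha> t - r * \<phi>2 t + \<beta> - d)"
    by (rule g_mono) (use g1 g2 good_ge good_le le in auto)
  ultimately show ?thesis unfolding Fop_def by simp
qed

lemma Fop_lower:
  assumes g: "good \<phi>" shows "(r * \<alpha>p + 1) * \<phi> t \<le> Fop \<phi> t"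
proof -
  have "r * \<alpha>p + 1 \<le> r * \<alpha> t - r * \<phi> t + \<beta> - d"
  proof -
    have "r * (-Aa) \<le> r * \<alpha> t" using mult_left_mono[OF Aa(2)[of t], of r] r_pos by simp
    moreover have "r * \<phi> t \<le> r * \<alpha>p" using good_le[OF g] r_pos by simp
    ultimately show ?thesis unfolding \<beta>_def by (simp add: algebra_simps)
  qed
  then have "(r * \<alpha>p + 1) * \<phi> t \<le> \<phi> t * (r * \<alpha> t - r * \<phi> t + \<beta> - d)"
    using good_ge[OF g] by (simp add: mult.commute mult_left_mono)
  moreover have "0 \<le> d * conv \<phi> t" using conv_bounds[OF g] d_pos by simp
  ultimately show ?thesis unfolding Fop_def by simp
qed

lemma Fop_abs: "good \<phi> \<Longrightarrow> \<bar>Fop \<phi> t\<bar> \<le> \<beta> * \<alpha>p"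
  using Fop_bounds by (metis abs_of_nonneg)

lemma Fop_meas: "good \<phi> \<Longrightarrow> Fop \<phi> \<in> borel_measurable lborel"
  by (rule cont_meas_lborel[OF Fop_cont])

lemma Top_deriv:
  assumes g: "good \<phi>"
  shows "(Top \<phi> has_real_derivative (\<beta> * Top \<phi> z - Fop \<phi> z) / s) (at z)"
proof -
  have "((\<lambda>z. (1/s) * Hc cc (Fop \<phi>) z) has_real_derivative (1/s) * (cc * Hc cc (Fop \<phi>) z - Fop \<phi> z)) (at z)"
    by (intro DERIV_cmult Hc_deriv[OF cc_pos Fop_cont[OF g] Fop_abs[OF g]])
  moreover have "(\<lambda>z. (1/s) * Hc cc (Fop \<phi>) z) = Top \<phi>" by (rule ext) (simp add: Top_def)
  moreover have "(1/s) * (cc * Hc cc (Fop \<phi>) z - Fop \<phi> z) = (\<beta> * Top \<phi> z - Fop \<phi> z) / s"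
  proof -
    have "cc * Hc cc (Fop \<phi>) z = \<beta> * Top \<phi> z" using s_pos unfolding Top_def cc_def by simp
    then show ?thesis by (simp add: divide_simps)
  qed
  ultimately show ?thesis by metis
qed

lemma Top_bounds:
  assumes g: "good \<phi>" shows "0 \<le> Top \<phi> z" "Top \<phi> z \<le> \<alpha>p"
proof -
  have b: "\<And>t. 0 \<le> Fop \<phi> t \<and> Fop \<phi> t \<le> \<beta> * \<alpha>p" using Fop_bounds[OF g] by auto
  show "0 \<le> Top \<phi> z" unfolding Top_def using Hc_bounds(1)[OF cc_pos Fop_meas[OF g] b] s_pos by simp
  have "Hc cc (Fop \<phi>) z \<le> \<beta> * \<alpha>p / cc" by (rule Hc_bounds(2)[OF cc_pos Fop_meas[OF g] b])
  also have "\<dots> = s * \<alpha>p" using beta_pos s_pos unfolding cc_def by (simp add: field_simps)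
  finally show "Top \<phi> z \<le> \<alpha>p" unfolding Top_def using s_pos by (simp add: field_simps)
qed

lemma Top_good: "good \<phi> \<Longrightarrow> good (Top \<phi>)"
  unfolding good_def[of "Top \<phi>"]
  using Top_bounds Top_deriv
  by (auto intro!: continuous_at_imp_continuous_on DERIV_isCont)

lemma Top_mono:
  assumes g1: "good \<phi>1" and g2: "good \<phi>2" and le: "\<And>x. \<phi>1 x \<le> \<phi>2 x"
  shows "Top \<phi>1 z \<le> Top \<phi>2 z"
proof -
  have "Hc cc (Fop \<phi>1) z \<le> Hc cc (Fop \<phi>2) z"
    by (rule Hc_mono[OF cc_pos Fop_meas[OF g1] Fop_meas[OF g2] Fop_abs[OF g1] Fop_abs[OF g2] Fop_mono[OF g1 g2 le]])
  then show ?thesis unfolding Top_def using s_pos by (simp add: divide_right_mono)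
qed

lemma Top_lip:
  assumes g: "good \<phi>"
  shows "\<bar>Top \<phi> x - Top \<phi> y\<bar> \<le> (\<beta> * \<alpha>p / s) * \<bar>x - y\<bar>"
proof -
  have dbound: "\<bar>(\<beta> * Top \<phi> z - Fop \<phi> z) / s\<bar> \<le> \<beta> * \<alpha>p / s" for z
  proof -
    have "0 \<le> \<beta> * Top \<phi> z" "\<beta> * Top \<phi> z \<le> \<beta> * \<alpha>p"
      using Top_bounds[OF g, of z] beta_pos by auto
    then have "\<bar>\<beta> * Top \<phi> z - Fop \<phi> z\<bar> \<le> \<beta> * \<alpha>p" using Fop_bounds[OF g, of z] by linarith
    then show ?thesis using s_pos by (simp add: divide_right_mono)
  qed
  have main: "\<bar>Top \<phi> b - Top \<phi> a\<bar> \<le> (\<beta> * \<alpha>p / s) * (b - a)" if "a < b" for a b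
  proof -
    have "\<exists>z>a. z < b \<and> Top \<phi> b - Top \<phi> a = (b - a) * ((\<beta> * Top \<phi> z - Fop \<phi> z) / s)"
      by (rule MVT2[OF that]) (rule Top_deriv[OF g])
    then obtain z where "Top \<phi> b - Top \<phi> a = (b - a) * ((\<beta> * Top \<phi> z - Fop \<phi> z) / s)" by blast
    then have "\<bar>Top \<phi> b - Top \<phi> a\<bar> = (b - a) * \<bar>(\<beta> * Top \<phi> z - Fop \<phi> z) / s\<bar>"
      using that by (simp add: abs_mult)
    also have "\<dots> \<le> (b - a) * (\<beta> * \<alpha>p / s)" using that dbound by (intro mult_left_mono) auto
    finally show ?thesis by (simp add: mult.commute)
  qed
  show ?thesis
  proof (cases x y rule: linorder_cases)
    case less then show ?thesis using main[OF less] by (simp add: abs_minus_commute)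
  next
    case equal then show ?thesis by simp
  next
    case greater then show ?thesis using main[OF greater] by simp
  qed
qed

lemma Top_lim:
  assumes g: "\<And>n. good (\<phi>s n)" and g0: "good \<phi>0" and lim: "\<And>x. (\<lambda>n. \<phi>s n x) \<longlonglongrightarrow> \<phi>0 x"
  shows "(\<lambda>n. Top (\<phi>s n) z) \<longlonglongrightarrow> Top \<phi>0 z"
proof -
  have F: "(\<lambda>n. Fop (\<phi>s n) t) \<longlonglongrightarrow> Fop \<phi>0 t" for t
    unfolding Fop_def
    by (intro tendsto_intros lim conv_lim[OF good_cont[OF g] good_abs[OF g] good_cont[OF g0]])
  have "(\<lambda>n. Hc cc (Fop (\<phi>s n)) z) \<longlonglongrightarrow> Hc cc (Fop \<phi>0) z"
    by (rule Hc_dom[OF cc_pos Fop_meas[OF g] Fop_meas[OF g0] Fop_abs[OF g] F])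
  then show ?thesis unfolding Top_def by (intro tendsto_intros)
qed

end


locale setting2 = setting +
  fixes Cr \<rho> T0 z0 :: real
  assumes Cr_pos: "Cr > 0" and \<rho>_pos: "\<rho> > 0"
    and rateT: "\<And>z. z \<ge> T0 \<Longrightarrow> \<alpha>p - \<alpha> z \<le> Cr * exp (-\<rho>*z)"
    and z0: "\<And>z. z \<le> z0 \<Longrightarrow> \<alpha> z \<le> \<alpha>m/2"
begin

definition "Kq' = \<bar>Kq\<bar> + 1"
definition "dl = -(r*\<alpha>m)/2"
definition "mu = min (min (e0/2) 1) (min (dl/(2 * s)) (dl/(2*d*Kq')))"
definition "lam = min (min (e0/2) \<rho>) (s/(d*Kq'))"
definition "Z = max T0 (max 0 z0)"
definition "Bb = (Cr + \<alpha>p) * exp (lam * Z)"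
definition "E t = \<alpha>p * exp (mu*(t - z0))"
definition "psup t = min \<alpha>p (E t)"
definition "psub t = max 0 (\<alpha>p - Bb * exp (-lam*t))"

lemma Kq'_pos: "Kq' > 0" and Kq'_ge: "Kq \<le> Kq'"
  unfolding Kq'_def by auto

lemma delta_pos: "dl > 0"
  unfolding dl_def using r_pos \<alpha>m_neg by (simp add: mult_pos_neg)

lemma Im_quad': "\<bar>l\<bar> \<le> e0/2 \<Longrightarrow> Im l \<le> 1 + l^2 * Kq'"
  using Im_quad[of l] Kq'_ge by (smt (verit) mult_left_mono zero_le_power2)

lemma mu_props: "mu > 0" "mu \<le> e0/2" "mu \<le> 1" "s * mu \<le> dl/2" "d * mu^2 * Kq' \<le> dl/2"
proof -
  show "mu > 0" unfolding mu_def using e0(1) delta_pos s_pos d_pos Kq'_pos by auto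
  show "mu \<le> e0/2" "mu \<le> 1" unfolding mu_def by auto
  have "mu \<le> dl/(2 * s)" unfolding mu_def by auto
  then show "s * mu \<le> dl/2" using s_pos by (simp add: field_simps)
  have m2: "mu \<le> dl/(2*d*Kq')" unfolding mu_def by auto
  have "mu^2 \<le> mu" using \<open>mu > 0\<close> \<open>mu \<le> 1\<close> by (simp add: power2_eq_square mult_left_le)
  then have "d * mu^2 * Kq' \<le> d * mu * Kq'" using d_pos Kq'_pos by simp
  also have "\<dots> \<le> dl/2" using m2 d_pos Kq'_pos by (simp add: field_simps)
  finally show "d * mu^2 * Kq' \<le> dl/2" .
qed

lemma lam_props: "lam > 0" "lam \<le> e0/2" "lam \<le> \<rho>" "d * lam^2 * Kq' \<le> s * lam"
proof -
  show "lam > 0" unfolding lam_def using e0(1) \<rho>_pos s_pos d_pos Kq'_pos by auto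
  have "lam \<le> min (e0/2) \<rho>" unfolding lam_def by (rule min.cobounded1)
  then show "lam \<le> e0/2" "lam \<le> \<rho>" by auto
  have "lam \<le> s/(d*Kq')" unfolding lam_def by auto
  then have "d * Kq' * lam \<le> s" using d_pos Kq'_pos by (simp add: field_simps)
  then have "lam * (d * Kq' * lam) \<le> lam * s" using \<open>lam > 0\<close> by (intro mult_left_mono) auto
  then show "d * lam^2 * Kq' \<le> s * lam" by (simp add: power2_eq_square algebra_simps)
qed

lemma Bb_pos: "Bb > 0" unfolding Bb_def using Cr_pos \<alpha>p_pos by simp

lemma E_pos: "E t > 0" unfolding E_def using \<alpha>p_pos by simp

lemma E_z0: "t \<ge> z0 \<Longrightarrow> E t \<ge> \<alpha>p"
  unfolding E_def using \<alpha>p_pos mu_props(1) by (simp add: mult_nonneg_nonneg)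

lemma E_deriv: "(E has_real_derivative mu * E t) (at t)"
  unfolding E_def[abs_def] by (auto intro!: derivative_eq_intros simp: E_def)

lemma psup_good: "good psup"
proof -
  have "continuous_on UNIV psup" unfolding psup_def[abs_def] E_def by (intro continuous_intros)
  moreover have "0 \<le> psup t \<and> psup t \<le> \<alpha>p" for t
    using \<alpha>p_pos by (auto simp: psup_def E_def)
  ultimately show ?thesis unfolding good_def by auto
qed

lemma psub_good: "good psub"
proof -
  have "continuous_on UNIV psub" unfolding psub_def[abs_def] by (intro continuous_intros)
  moreover have "0 \<le> psub t \<and> psub t \<le> \<alpha>p" for t
    using \<alpha>p_pos Bb_pos by (auto simp: psub_def)
  ultimately show ?thesis unfolding good_def by auto
qed

lemma psub_pos_Z: assumes "Bb * exp (-lam*t) < \<alpha>p" shows "t > Z"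
proof (rule ccontr)
  assume "\<not> t > Z"
  then have "lam * (Z - t) \<ge> 0" using lam_props(1) by simp
  then have "exp (lam * (Z - t)) \<ge> 1" by simp
  moreover have "Bb * exp (-lam*t) = (Cr + \<alpha>p) * exp (lam * (Z - t))"
    unfolding Bb_def by (simp add: exp_add[symmetric] algebra_simps)
  ultimately have "Bb * exp (-lam*t) \<ge> Cr + \<alpha>p"
    using Cr_pos \<alpha>p_pos by (metis le_add_same_cancel2 less_eq_real_def mult_left_mono mult.right_neutral add_pos_pos)
  then show False using assms Cr_pos by linarith
qed

lemma psub_le_psup: "psub t \<le> psup t"
proof (cases "Bb * exp (-lam*t) < \<alpha>p")
  case True
  then have "t > Z" by (rule psub_pos_Z)
  then have "t \<ge> z0" unfolding Z_def by simp
  then have "psup t = \<alpha>p" unfolding psup_def using E_z0 by simp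
  then show ?thesis unfolding psub_def using \<alpha>p_pos Bb_pos by simp
next
  case False
  then have "psub t = 0" unfolding psub_def by simp
  then show ?thesis using good_ge[OF psup_good] by simp
qed

lemma conv_E_int: "integrable lebesgue (\<lambda>y. J y * E (t - y))"
proof -
  have i: "integrable lebesgue (\<lambda>y. J y * exp ((-mu)*y))"
    using J_exp_int'[of "-mu"] mu_props e0(1) by simp
  have "integrable lebesgue (\<lambda>y. E t * (J y * exp ((-mu)*y)))"
    using i by (rule integrable_mult_right)
  moreover have "(\<lambda>y. E t * (J y * exp ((-mu)*y))) = (\<lambda>y. J y * E (t - y))"
    by (rule ext) (simp add: E_def exp_add[symmetric] algebra_simps)
  ultimately show ?thesis by metis
qed

lemma conv_psup: "conv psup t \<le> E t * Im (-mu)"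
proof -
  have "conv psup t \<le> (\<integral>y. J y * E (t - y) \<partial>lebesgue)"
    unfolding conv_def
  proof (rule integral_mono[OF conv_int[OF good_cont[OF psup_good] good_abs[OF psup_good]] conv_E_int])
    fix y show "J y * psup (t - y) \<le> J y * E (t - y)"
      using J_nonneg[of y] by (intro mult_left_mono) (auto simp: psup_def)
  qed
  also have "(\<integral>y. J y * E (t - y) \<partial>lebesgue) = (\<integral>y. E t * (J y * exp ((-mu)*y)) \<partial>lebesgue)"
    by (rule Bochner_Integration.integral_cong) (auto simp: E_def exp_add[symmetric] algebra_simps)
  also have "\<dots> = E t * Im (-mu)" unfolding Im_def by simp
  finally show ?thesis .
qed

lemma Fop_psup: assumes "t \<le> z0" shows "Fop psup t \<le> (\<beta> - s*mu) * E t"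
proof -
  have k: "r * \<alpha> t + \<beta> - d \<ge> 0"
  proof -
    have "r * (\<alpha> t + Aa) \<ge> 0" using Aa(2)[of t] r_pos by (intro mult_nonneg_nonneg) auto
    moreover have "0 \<le> \<alpha>p * r" using r_pos \<alpha>p_pos by simp
    ultimately show ?thesis unfolding \<beta>_def by (simp add: algebra_simps)
  qed
  have p0: "0 \<le> psup t" and pE: "psup t \<le> E t" using good_ge[OF psup_good] by (auto simp: psup_def)
  have "psup t * (r * \<alpha> t - r * psup t + \<beta> - d) \<le> psup t * (r * \<alpha> t + \<beta> - d)"
    using p0 r_pos by (intro mult_left_mono) auto
  also have "\<dots> \<le> E t * (r * \<alpha> t + \<beta> - d)" using pE k by (intro mult_right_mono) auto
  finally have g1: "psup t * (r * \<alpha> t - r * psup t + \<beta> - d) \<le> E t * (r * \<alpha> t + \<beta> - d)" .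
  have ImB: "Im (-mu) \<le> 1 + mu^2 * Kq'" using Im_quad'[of "-mu"] mu_props by simp
  have "d * conv psup t \<le> d * (E t * Im (-mu))" using conv_psup d_pos by simp
  also have "\<dots> \<le> d * (E t * (1 + mu^2 * Kq'))" using ImB E_pos[of t] d_pos by simp
  finally have g2: "d * conv psup t \<le> d * (E t * (1 + mu^2 * Kq'))" .
  have "r * \<alpha> t \<le> r * (\<alpha>m/2)" using z0[OF assms] r_pos by simp
  then have "r * \<alpha> t \<le> -dl" unfolding dl_def by simp
  then have "d * (1 + mu^2 * Kq') + (r * \<alpha> t + \<beta> - d) \<le> \<beta> - s*mu"
    using mu_props by (simp add: algebra_simps)
  then have "E t * (d * (1 + mu^2 * Kq') + (r * \<alpha> t + \<beta> - d)) \<le> E t * (\<beta> - s*mu)"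
    using E_pos[of t] by simp
  then show ?thesis using g1 g2 unfolding Fop_def by (simp add: algebra_simps)
qed

lemma Top_psup: "Top psup z \<le> psup z"
proof -
  let ?h = "Top psup"
  have hle: "?h x \<le> \<alpha>p" for x by (rule Top_bounds(2)[OF psup_good])
  have "?h z \<le> E z"
  proof (cases "z \<le> z0")
    case True
    let ?w = "\<lambda>t. E t - ?h t"
    have "exp (-(\<beta>/s)*z0) * ?w z0 \<le> exp (-(\<beta>/s)*z) * ?w z"
    proof (rule mono_exp[OF s_pos True])
      fix t assume t: "z \<le> t" "t \<le> z0"
      show "(?w has_real_derivative (mu * E t - (\<beta> * ?h t - Fop psup t) / s)) (at t)"
        by (intro derivative_intros E_deriv Top_deriv[OF psup_good])
      have "Fop psup t \<le> (\<beta> - s*mu) * E t" by (rule Fop_psup[OF t(2)])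
      moreover have "s * (mu * E t - (\<beta> * ?h t - Fop psup t) / s) = s * mu * E t - \<beta> * ?h t + Fop psup t"
        using s_pos by (simp add: field_simps)
      ultimately show "s * (mu * E t - (\<beta> * ?h t - Fop psup t) / s) \<le> \<beta> * (E t - ?h t)"
        by (simp add: algebra_simps)
    qed
    moreover have "?w z0 \<ge> 0" using hle[of z0] by (simp add: E_def)
    ultimately have "exp (-(\<beta>/s)*z) * ?w z \<ge> 0"
      by (smt (verit) exp_gt_zero mult_nonneg_nonneg)
    then have "?w z \<ge> 0" by (simp add: zero_le_mult_iff)
    then show ?thesis by simp
  next
    case False
    then show ?thesis using hle[of z] E_z0[of z] by simp
  qed
  then show ?thesis using hle[of z] by (simp add: psup_def[of z])
qed


lemma conv_psub: "\<alpha>p - Bb * exp (-lam*t) * Im lam \<le> conv psub t"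
proof -
  define w where "w = Bb * exp (-lam*t)"
  have i1: "integrable lebesgue (\<lambda>y. \<alpha>p * J y - w * (J y * exp (lam*y)))"
    using J_int J_exp_int'[of lam] lam_props e0(1) by auto
  have "(\<integral>y. \<alpha>p * J y - w * (J y * exp (lam*y)) \<partial>lebesgue) \<le> conv psub t"
    unfolding conv_def
  proof (rule integral_mono[OF i1 conv_int[OF good_cont[OF psub_good] good_abs[OF psub_good]]])
    fix y
    have "w * exp (lam*y) = Bb * exp (-lam*(t-y))"
      unfolding w_def by (simp add: exp_add[symmetric] algebra_simps)
    moreover have "\<alpha>p - Bb * exp (-lam*(t-y)) \<le> psub (t - y)" unfolding psub_def by simp
    ultimately have "\<alpha>p - w * exp (lam*y) \<le> psub (t - y)" by simp
    then have "J y * (\<alpha>p - w * exp (lam*y)) \<le> J y * psub (t - y)"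
      using J_nonneg[of y] by (intro mult_left_mono) auto
    then show "\<alpha>p * J y - w * (J y * exp (lam*y)) \<le> J y * psub (t - y)" by (simp add: algebra_simps)
  qed
  also have "(\<integral>y. \<alpha>p * J y - w * (J y * exp (lam*y)) \<partial>lebesgue) = \<alpha>p * (\<integral>y. J y \<partial>lebesgue) - w * Im lam"
  proof -
    have a: "integrable lebesgue (\<lambda>y. \<alpha>p * J y)" using J_int by simp
    have b: "integrable lebesgue (\<lambda>y. w * (J y * exp (lam*y)))"
      using J_exp_int'[of lam] lam_props e0(1) by simp
    show ?thesis using Bochner_Integration.integral_diff[OF a b] unfolding Im_def by simp
  qed
  finally show ?thesis using J_mass unfolding w_def by simp
qed

lemma Fop_psub:
  assumes wlt: "Bb * exp (-lam*t) < \<alpha>p"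
  shows "\<beta> * (\<alpha>p - Bb * exp (-lam*t)) - s * lam * (Bb * exp (-lam*t)) \<le> Fop psub t"
proof -
  define w where "w = Bb * exp (-lam*t)"
  define u where "u = \<alpha>p - w"
  have w0: "w > 0" unfolding w_def using Bb_pos by simp
  have u0: "u > 0" unfolding u_def w_def using wlt by simp
  have pu: "psub t = u" unfolding psub_def u_def w_def using wlt by simp
  have tZ: "t > Z" using psub_pos_Z[OF wlt] .
  then have tT0: "t \<ge> T0" and t0: "t \<ge> 0" unfolding Z_def by auto
  have al: "\<alpha> t \<ge> \<alpha>p - Cr * exp (-\<rho>*t)" using rateT[OF tT0] by simp
  have wC: "w \<ge> Cr * exp (-\<rho>*t)"
  proof -
    have "lam * Z \<ge> 0" using lam_props(1) unfolding Z_def by simp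
    then have "exp (lam * Z) \<ge> 1" by simp
    then have "Bb \<ge> Cr + \<alpha>p" unfolding Bb_def using Cr_pos \<alpha>p_pos
      by (metis mult.right_neutral mult_left_mono add_pos_pos less_eq_real_def)
    then have Bc: "Bb \<ge> Cr" using \<alpha>p_pos by simp
    have "-\<rho>*t \<le> -lam*t" using lam_props(3) t0 by (simp add: mult_right_mono)
    then have "exp (-\<rho>*t) \<le> exp (-lam*t)" by simp
    then have "Cr * exp (-\<rho>*t) \<le> Cr * exp (-lam*t)" using Cr_pos by simp
    also have "\<dots> \<le> Bb * exp (-lam*t)" using Bc by (intro mult_right_mono) auto
    finally show ?thesis unfolding w_def .
  qed
  have au: "\<alpha> t - u \<ge> 0" using al wC unfolding u_def by linarith
  have ImB: "Im lam \<le> 1 + lam^2 * Kq'" using Im_quad'[of lam] lam_props by simp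
  have c: "d * (\<alpha>p - w * Im lam) \<le> d * conv psub t" using conv_psub[of t] d_pos unfolding w_def by simp
  have "d * w * (1 - Im lam) \<ge> d * w * (- (lam^2 * Kq'))"
    using ImB d_pos w0 by (intro mult_left_mono) auto
  moreover have "d * w * (- (lam^2 * Kq')) + s * lam * w \<ge> 0"
  proof -
    have "w * (d * lam^2 * Kq') \<le> w * (s * lam)" using lam_props(4) w0 by (intro mult_left_mono) auto
    then show ?thesis by (simp add: algebra_simps)
  qed
  moreover have "r * u * (\<alpha> t - u) \<ge> 0" using r_pos u0 au by simp
  ultimately have key: "d * w * (1 - Im lam) + r * u * (\<alpha> t - u) + s * lam * w \<ge> 0" by linarith
  have "Fop psub t = d * conv psub t + u * (r * \<alpha> t - r * u + \<beta> - d)" unfolding Fop_def pu ..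
  moreover have "\<beta> * u - s * lam * w + (d * w * (1 - Im lam) + r * u * (\<alpha> t - u) + s * lam * w)
      = d * (\<alpha>p - w * Im lam) + u * (r * \<alpha> t - r * u + \<beta> - d)"
    unfolding u_def by (simp add: algebra_simps)
  ultimately have "\<beta> * u - s * lam * w \<le> Fop psub t" using key c by linarith
  then show ?thesis unfolding u_def w_def .
qed

lemma Top_psub: "psub z \<le> Top psub z"
proof (cases "Bb * exp (-lam*z) < \<alpha>p")
  case False
  then have "psub z = 0" unfolding psub_def by simp
  then show ?thesis using Top_bounds(1)[OF psub_good] by simp
next
  case True
  let ?h = "Top psub"
  let ?w = "\<lambda>t. ?h t - (\<alpha>p - Bb * exp (-lam*t))"
  have wlt: "Bb * exp (-lam*t) < \<alpha>p" if "z \<le> t" for t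
  proof -
    have "-lam*t \<le> -lam*z" using that lam_props(1) by simp
    then have "Bb * exp (-lam*t) \<le> Bb * exp (-lam*z)" using Bb_pos by simp
    then show ?thesis using True by linarith
  qed
  have "0 \<le> ?w z"
  proof (rule compare_top[OF s_pos beta_pos, where B = "2*\<alpha>p" and w = ?w
      and w' = "\<lambda>t. (\<beta> * ?h t - Fop psub t) / s - lam * (Bb * exp (-lam*t))"])
    fix t assume t: "z \<le> t"
    show "(?w has_real_derivative ((\<beta> * ?h t - Fop psub t) / s - lam * (Bb * exp (-lam*t)))) (at t)"
      by (rule derivative_eq_intros Top_deriv[OF psub_good] refl | simp)+
    have F: "\<beta> * (\<alpha>p - Bb * exp (-lam*t)) - s * lam * (Bb * exp (-lam*t)) \<le> Fop psub t"
      by (rule Fop_psub[OF wlt[OF t]])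
    have "s * ((\<beta> * ?h t - Fop psub t) / s - lam * (Bb * exp (-lam*t)))
        = \<beta> * ?h t - Fop psub t - s * lam * (Bb * exp (-lam*t))"
      using s_pos by (simp add: field_simps)
    then show "s * ((\<beta> * ?h t - Fop psub t) / s - lam * (Bb * exp (-lam*t))) \<le> \<beta> * ?w t"
      using F by (simp add: algebra_simps)
    have "0 \<le> ?h t" "?h t \<le> \<alpha>p" using Top_bounds[OF psub_good] by auto
    moreover have "0 < Bb * exp (-lam*t)" using Bb_pos by simp
    ultimately show "\<bar>?w t\<bar> \<le> 2 * \<alpha>p" using wlt[OF t] \<alpha>p_pos by linarith
  qed
  then show ?thesis unfolding psub_def using True by simp
qed

end


lemma exp_neg_lim: "(c::real) > 0 \<Longrightarrow> ((\<lambda>t. exp (-(c*t))) \<longlongrightarrow> 0) at_top"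
  by real_asymp

lemma exp_bot_lim: "(c::real) > 0 \<Longrightarrow> ((\<lambda>t. exp (c*(t - a))) \<longlongrightarrow> 0) at_bot"
proof -
  assume c: "c > 0"
  have "((\<lambda>x. exp (c*(-x - a))) \<longlongrightarrow> 0) at_top" using c by real_asymp
  then show ?thesis by (simp add: filterlim_at_bot_mirror)
qed

context setting2 begin

definition phis :: "nat \<Rightarrow> real \<Rightarrow> real" where "phis n = (Top ^^ n) psup"

lemma phis_0: "phis 0 = psup" and phis_Suc: "phis (Suc n) = Top (phis n)"
  unfolding phis_def by simp_all

lemma phis_good: "good (phis n)"
  by (induction n) (auto simp: phis_0 phis_Suc psup_good Top_good)

lemma phis_props: "(\<forall>x. psub x \<le> phis n x) \<and> (\<forall>x. phis (Suc n) x \<le> phis n x)"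
proof (induction n)
  case 0
  show ?case using psub_le_psup Top_psup by (simp add: phis_0 phis_Suc)
next
  case (Suc n)
  have a: "psub x \<le> phis (Suc n) x" for x
  proof -
    have "psub x \<le> Top psub x" by (rule Top_psub)
    also have "\<dots> \<le> Top (phis n) x"
      by (rule Top_mono[OF psub_good phis_good]) (use Suc in auto)
    finally show ?thesis by (simp add: phis_Suc)
  qed
  have b: "phis (Suc (Suc n)) x \<le> phis (Suc n) x" for x
  proof -
    have "Top (phis (Suc n)) x \<le> Top (phis n) x"
      by (rule Top_mono[OF phis_good phis_good]) (use Suc in auto)
    then show ?thesis by (simp only: phis_Suc)
  qed
  show ?case using a b by auto
qed

lemma phis_dec: "decseq (\<lambda>n. phis n x)"
  by (rule decseq_SucI) (use phis_props in auto)

lemma phis_le_psup: "phis n x \<le> psup x"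
  using decseqD[OF phis_dec[of x], of 0 n] by (simp add: phis_0)

definition phi :: "real \<Rightarrow> real" where "phi x = (INF n. phis n x)"

lemma phi_lim: "(\<lambda>n. phis n x) \<longlonglongrightarrow> phi x"
  unfolding phi_def
proof (rule LIMSEQ_decseq_INF[OF _ phis_dec])
  show "bdd_below (range (\<lambda>n. phis n x))"
    by (rule bdd_belowI[of _ 0]) (use good_ge[OF phis_good] in auto)
qed

lemma phi_ge_psub: "psub x \<le> phi x"
  by (rule LIMSEQ_le_const[OF phi_lim]) (use phis_props in auto)

lemma phi_le_psup: "phi x \<le> psup x"
  by (rule LIMSEQ_le_const2[OF phi_lim]) (use phis_le_psup in auto)

lemma phi_range: "0 \<le> phi x" "phi x \<le> \<alpha>p"
proof -
  show "0 \<le> phi x" by (rule LIMSEQ_le_const[OF phi_lim]) (use good_ge[OF phis_good] in auto)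
  show "phi x \<le> \<alpha>p" by (rule LIMSEQ_le_const2[OF phi_lim]) (use good_le[OF phis_good] in auto)
qed

lemma phi_lip: "\<bar>phi x - phi y\<bar> \<le> (\<beta> * \<alpha>p / s) * \<bar>x - y\<bar>"
proof -
  have l: "(\<lambda>n. \<bar>phis (Suc n) x - phis (Suc n) y\<bar>) \<longlonglongrightarrow> \<bar>phi x - phi y\<bar>"
    by (intro tendsto_intros LIMSEQ_Suc phi_lim)
  show ?thesis
    by (rule LIMSEQ_le_const2[OF l]) (use Top_lip[OF phis_good] in \<open>auto simp: phis_Suc\<close>)
qed

lemma phi_good: "good phi"
proof -
  have "(\<beta> * \<alpha>p / s)-lipschitz_on UNIV phi"
  proof (rule lipschitz_onI)
    show "0 \<le> \<beta> * \<alpha>p / s" using beta_pos \<alpha>p_pos s_pos by simp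
    fix x y show "dist (phi x) (phi y) \<le> \<beta> * \<alpha>p / s * dist x y"
      using phi_lip by (simp add: dist_real_def)
  qed
  then have "continuous_on UNIV phi" by (rule lipschitz_on_continuous_on)
  then show ?thesis unfolding good_def using phi_range by auto
qed

lemma phi_fix: "Top phi = phi"
proof
  fix x
  have "(\<lambda>n. Top (phis n) x) \<longlonglongrightarrow> Top phi x"
    by (rule Top_lim[OF phis_good phi_good phi_lim])
  moreover have "(\<lambda>n. Top (phis n) x) \<longlonglongrightarrow> phi x"
    using LIMSEQ_Suc[OF phi_lim[of x]] by (simp add: phis_Suc)
  ultimately show "Top phi x = phi x" by (rule LIMSEQ_unique)
qed

lemma phi_deriv: "(phi has_real_derivative (\<beta> * phi z - Fop phi z) / s) (at z)"
  using Top_deriv[OF phi_good, of z] unfolding phi_fix .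

lemma psub_lim: "(psub \<longlongrightarrow> \<alpha>p) at_top"
proof -
  have "((\<lambda>t. exp (-lam*t)) \<longlongrightarrow> 0) at_top"
    using exp_neg_lim[OF lam_props(1)] by simp
  then have "((\<lambda>t. max 0 (\<alpha>p - Bb * exp (-lam*t))) \<longlongrightarrow> max 0 (\<alpha>p - Bb * 0)) at_top"
    by (intro tendsto_intros)
  then show ?thesis using \<alpha>p_pos unfolding psub_def[abs_def] by simp
qed

lemma psup_lim: "(psup \<longlongrightarrow> 0) at_bot"
proof -
  have "((\<lambda>t. exp (mu*(t - z0))) \<longlongrightarrow> 0) at_bot"
    by (rule exp_bot_lim[OF mu_props(1)])
  then have "((\<lambda>t. min \<alpha>p (\<alpha>p * exp (mu*(t - z0)))) \<longlongrightarrow> min \<alpha>p (\<alpha>p * 0)) at_bot"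
    by (intro tendsto_intros)
  then show ?thesis using \<alpha>p_pos unfolding psup_def[abs_def] E_def by simp
qed

lemma phi_pos: "phi z > 0"
proof -
  have "eventually (\<lambda>t. psub t > \<alpha>p/2) at_top"
    using psub_lim by (rule order_tendstoD) (use \<alpha>p_pos in simp)
  then obtain N where N: "\<And>t. t \<ge> N \<Longrightarrow> psub t > \<alpha>p/2" by (auto simp: eventually_at_top_linorder)
  define t where "t = max N z"
  have t: "psub t > \<alpha>p/2" "t \<ge> z" using N[of t] by (auto simp: t_def)
  have pt: "phi t > 0" using t(1) phi_ge_psub[of t] \<alpha>p_pos by linarith
  have "exp (-((\<beta> - (r*\<alpha>p + 1))/s)*t) * phi t \<le> exp (-((\<beta> - (r*\<alpha>p + 1))/s)*z) * phi z"
  proof (rule mono_exp[OF s_pos t(2)])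
    fix x assume "z \<le> x" "x \<le> t"
    show "(phi has_real_derivative (\<beta> * phi x - Fop phi x) / s) (at x)" by (rule phi_deriv)
    have "(r*\<alpha>p + 1) * phi x \<le> Fop phi x" by (rule Fop_lower[OF phi_good])
    moreover have "s * ((\<beta> * phi x - Fop phi x) / s) = \<beta> * phi x - Fop phi x" using s_pos by simp
    moreover have "(\<beta> - (r*\<alpha>p + 1)) * phi x = \<beta> * phi x - (r*\<alpha>p + 1) * phi x"
      by (simp add: left_diff_distrib)
    ultimately show "s * ((\<beta> * phi x - Fop phi x) / s) \<le> (\<beta> - (r*\<alpha>p + 1)) * phi x"
      by linarith
  qed
  moreover have "exp (-((\<beta> - (r*\<alpha>p + 1))/s)*t) * phi t > 0" using pt by simp
  ultimately have "exp (-((\<beta> - (r*\<alpha>p + 1))/s)*z) * phi z > 0" by linarith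
  then show ?thesis by (simp add: zero_less_mult_iff)
qed

lemma main:
  "\<exists>\<phi> \<phi>' :: real \<Rightarrow> real.
           (\<forall>z. (\<phi> has_real_derivative \<phi>' z) (at z)) \<and> continuous_on UNIV \<phi>' \<and>
           (\<forall>z. \<phi> z > 0) \<and>
           (\<forall>z. - s * \<phi>' z = d * ((\<integral>y. J y * \<phi> (z - y) \<partial>lebesgue) - \<phi> z)
                              + r * \<phi> z * (\<alpha> z - \<phi> z)) \<and>
           (\<phi> \<longlongrightarrow> 0) at_bot \<and> (\<phi> \<longlongrightarrow> \<alpha>p) at_top \<and>
           (\<exists>lam0>0. \<exists>B>0. \<forall>z. \<alpha>p \<ge> \<phi> z \<and> \<phi> z \<ge> \<alpha>p - B * exp (- lam0 * z))"
proof -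
  define dd where "dd z = (\<beta> * phi z - Fop phi z) / s" for z
  have f1: "\<forall>z. (phi has_real_derivative dd z) (at z)" unfolding dd_def using phi_deriv by blast
  have f2: "continuous_on UNIV dd"
    unfolding dd_def[abs_def] using good_cont[OF phi_good] Fop_cont[OF phi_good] s_pos
    by (intro continuous_intros) auto
  have f3: "\<forall>z. phi z > 0" using phi_pos by blast
  have f4: "\<forall>z. - s * dd z = d * ((\<integral>y. J y * phi (z - y) \<partial>lebesgue) - phi z) + r * phi z * (\<alpha> z - phi z)"
  proof
    fix z
    have "- s * dd z = Fop phi z - \<beta> * phi z"
    proof -
      have "s * dd z = \<beta> * phi z - Fop phi z" using s_pos unfolding dd_def by simp
      then show ?thesis by simp
    qed
    also have "\<dots> = d * (conv phi z - phi z) + r * phi z * (\<alpha> z - phi z)"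
      unfolding Fop_def by (simp add: algebra_simps)
    finally show "- s * dd z = d * ((\<integral>y. J y * phi (z - y) \<partial>lebesgue) - phi z) + r * phi z * (\<alpha> z - phi z)"
      by (simp only: conv_def)
  qed
  have f5: "(phi \<longlongrightarrow> 0) at_bot"
    by (rule tendsto_sandwich[OF _ _ tendsto_const psup_lim])
       (use phi_range phi_le_psup in auto)
  have f6: "(phi \<longlongrightarrow> \<alpha>p) at_top"
    by (rule tendsto_sandwich[OF _ _ psub_lim tendsto_const])
       (use phi_range phi_ge_psub in auto)
  have f7: "\<exists>lam0>0. \<exists>B>0. \<forall>z. \<alpha>p \<ge> phi z \<and> phi z \<ge> \<alpha>p - B * exp (- lam0 * z)"
  proof (intro exI conjI allI)
    show "lam > 0" by (rule lam_props(1))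
    show "Bb > 0" by (rule Bb_pos)
    fix z
    show "\<alpha>p \<ge> phi z" by (rule phi_range)
    have "\<alpha>p - Bb * exp (- lam * z) \<le> psub z" unfolding psub_def by simp
    then show "phi z \<ge> \<alpha>p - Bb * exp (- lam * z)" using phi_ge_psub[of z] by linarith
  qed
  show ?thesis
    apply (rule exI[of _ phi], rule exI[of _ dd])
    by (intro conjI f1 f2 f3 f4 f5 f6 f7)
qed

end



theorem proposition2p4:
  fixes s d r :: real and J \<alpha> :: "real \<Rightarrow> real"
    and \<alpha>m \<alpha>p :: real and \<eta> ym yp :: real and lt lh :: ereal
  assumes s_pos: "s > 0" and d_pos: "d > 0" and r_pos: "r > 0"
  (* (J1) *)
    and J_meas: "J \<in> borel_measurable lebesgue"
    and J_nonneg: "\<And>y. J y \<ge> 0"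
    and J_int: "integrable lebesgue J" and J_mass: "integral\<^sup>L lebesgue J = 1"
    and eta_pos: "\<eta> > 0" and ym_neg: "ym < 0" and yp_pos: "yp > 0"
    and J_pos_m: "\<And>y. y \<in> {ym - \<eta> <..< ym + \<eta>} \<Longrightarrow> J y > 0"
    and J_pos_p: "\<And>y. y \<in> {yp - \<eta> <..< yp + \<eta>} \<Longrightarrow> J y > 0"
  (* (J2) *)
    and J_mean: "integral\<^sup>L lebesgue (\<lambda>y. J y * y) = 0"
  (* (J3) *)
    and lt_neg: "lt < 0" and lh_pos: "0 < lh"
    and I_fin: "\<And>l. lt < ereal l \<Longrightarrow> ereal l < lh \<Longrightarrow> expmom J l < \<infinity>"
    and I_lt: "((\<lambda>l. expmom J l) \<longlongrightarrow> \<infinity>) (ereal_down lt)"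
    and I_lh: "((\<lambda>l. expmom J l) \<longlongrightarrow> \<infinity>) (ereal_up lh)"
  (* alpha continuous, (alpha1), (alpha2) *)
    and \<alpha>_cont: "continuous_on UNIV \<alpha>"
    and \<alpha>_bot: "(\<alpha> \<longlongrightarrow> \<alpha>m) at_bot" and \<alpha>_top: "(\<alpha> \<longlongrightarrow> \<alpha>p) at_top"
    and \<alpha>m_neg: "\<alpha>m < 0" and \<alpha>p_pos: "0 < \<alpha>p"
    and \<alpha>_le: "\<And>z. \<alpha> z \<le> \<alpha>p"
    and \<alpha>_rate: "\<exists>C>0. \<exists>\<rho>>0. eventually (\<lambda>z. \<alpha>p - \<alpha> z \<le> C * exp (- \<rho> * z)) at_top"
  shows "\<exists>\<phi> \<phi>' :: real \<Rightarrow> real.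
           (\<forall>z. (\<phi> has_real_derivative \<phi>' z) (at z)) \<and> continuous_on UNIV \<phi>' \<and>
           (\<forall>z. \<phi> z > 0) \<and>
           (\<forall>z. - s * \<phi>' z = d * ((\<integral>y. J y * \<phi> (z - y) \<partial>lebesgue) - \<phi> z)
                              + r * \<phi> z * (\<alpha> z - \<phi> z)) \<and>
           (\<phi> \<longlongrightarrow> 0) at_bot \<and> (\<phi> \<longlongrightarrow> \<alpha>p) at_top \<and>
           (\<exists>lam0>0. \<exists>B>0. \<forall>z. \<alpha>p \<ge> \<phi> z \<and> \<phi> z \<ge> \<alpha>p - B * exp (- lam0 * z))"
proof -
  obtain C \<rho> where C: "C > 0" and \<rho>: "\<rho> > 0"
    and ev: "eventually (\<lambda>z. \<alpha>p - \<alpha> z \<le> C * exp (- \<rho> * z)) at_top"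
    using \<alpha>_rate by blast
  obtain T0 where T0: "\<And>z. z \<ge> T0 \<Longrightarrow> \<alpha>p - \<alpha> z \<le> C * exp (- \<rho> * z)"
    using ev by (auto simp: eventually_at_top_linorder)
  have "eventually (\<lambda>z. \<alpha> z < \<alpha>m/2) at_bot"
    using \<alpha>_bot by (rule order_tendstoD) (use \<alpha>m_neg in simp)
  then obtain z0 where z0: "\<And>z. z \<le> z0 \<Longrightarrow> \<alpha> z < \<alpha>m/2"
    by (auto simp: eventually_at_bot_linorder)
  interpret S: setting2 s d r J \<alpha> \<alpha>m \<alpha>p lt lh C \<rho> T0 z0
  proof (unfold_locales)
    show "\<And>z. z \<le> z0 \<Longrightarrow> \<alpha> z \<le> \<alpha>m/2" using z0 by (simp add: less_imp_le)
  qed (use assms C \<rho> T0 in auto)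
  show ?thesis by (rule S.main)
qed

end
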